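(* Let $k$ be a field containing all $m$-th roots of unity, with $p\nmid m$ if $\operatorname{char}(k)=p>0$. Let $\mathcal A$ be a perfect $k$-algebra, $S$ a commutative associative unital $k$-algebra, $\sigma_1\in\operatorname{Aut}(\mathcal A)$, $\sigma_2\in\operatorname{Aut}(S)$ with $\sigma_1^m=\mathrm{id}$, $\sigma_2^m=\mathrm{id}$, and suppose $S_{\bar 1}$ contains an invertible element $u$ of $S$. Let $d\in\mathcal D((\mathcal A\otimes S)_{\bar 0})$, $i,j,s,t\in\mathbb Z$, $a_{\bar i}\in\mathcal A_{\bar i}$, $a_{\bar j}\in\mathcal A_{\bar j}$, $b_{-\bar i+\bar s}\in S_{-\bar i+\bar s}$, $b_{-\bar j+\bar t}\in S_{-\bar j+\bar t}$. Then $$\big[u^{-m+s}d(a_{\bar i}\otimes u^{-s+m}b_{-\bar i+\bar s})-u^{s}d(a_{\bar i}\otimes u^{-s}b_{-\bar i+\bar s})\big](a_{\bar j}\otimes b_{-\bar j+\bar t}) =(a_{\bar i}\otimes b_{-\bar i+\bar s})\big[u^{-m+t}d(a_{\bar j}\otimes u^{-t+m}b_{-\bar j+\bar t})-u^{t}d(a_{\bar j}\otimes u^{-t}b_{-\bar j+\bar t})\big].$$ In particular, $$(a_{\bar i}\otimes u^{-i})\big[u^{-m+j}d(a_{\bar j}\otimes u^{-j+m})-d(a_{\bar j}\otimes u^{-j})u^{j}\big]u^{-j}=\big[u^{-m+i}d(a_{\bar i}\otimes u^{-i+m})-d(a_{\bar i}\otimes u^{-i})u^{i}\big]u^{-i}(a_{\bar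 j}\otimes u^{-j}),$$ and $$(a_{\bar i}\otimes 1)\big[u^{-m+t}d(a_{\bar j}\otimes u^{-t+m}b_{-\bar j+\bar t})-d(a_{\bar j}\otimes u^{-t}b_{-\bar j+\bar t})u^{t}\big]=\big[u^{-m+i}d(a_{\bar i}\otimes u^{-i+m})-d(a_{\bar i}\otimes u^{-i})u^{i}\big](a_{\bar j}\otimes b_{-\bar j+\bar t}).$$
   Context: Algebras are $k$-vector spaces with bilinear product (not necessarily associative); perfect means $\mathcal A\mathcal A=\mathcal A$; $\mathcal D$ denotes derivations. Fix a primitive $m$-th root of unity $\omega$; $\mathcal A_{\bar i}=\{a\mid\sigma_1(a)=\omega^ia\}$, $S_{\bar i}=\{s\mid\sigma_2(s)=\omega^is\}$, and $(\mathcal A\otimes S)_{\bar 0}=\sum_{\bar j}\mathcal A_{-\bar j}\otimes S_{\bar j}$ is the fixed-point subalgebra of $\sigma_1\otimes\sigma_2$ (product $(a\otimes s)(a'\otimes s')=aa'\otimes ss'$). $\mathcal A\otimes S$ is an $S$-bimodule via $s'(a\otimes s)=(a\otimes s)s'=a\otimes ss'$, and products of elements of $S$ with elements of $\mathcal A\otimes S$ denote this action. *)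

theory Defs
  imports Complex_Main
begin

definition bilin ::
  "('k::field \<Rightarrow> 'a::ab_group_add \<Rightarrow> 'a) \<Rightarrow> ('k \<Rightarrow> 'b::ab_group_add \<Rightarrow> 'b) \<Rightarrow>
   ('k \<Rightarrow> 'c::ab_group_add \<Rightarrow> 'c) \<Rightarrow> ('a \<Rightarrow> 'b \<Rightarrow> 'c) \<Rightarrow> bool" where
  "bilin s1 s2 s3 f \<longleftrightarrow>
     (\<forall>x. Vector_Spaces.linear s2 s3 (f x)) \<and> (\<forall>y. Vector_Spaces.linear s1 s3 (\<lambda>x. f x y))"

text \<open>Over a field this characterises the
  tensor product up to unique isomorphism.\<close>
definition is_tensor_product ::
  "('k::field \<Rightarrow> 'a::ab_group_add \<Rightarrow> 'a) \<Rightarrow> ('k \<Rightarrow> 's::ab_group_add \<Rightarrow> 's) \<Rightarrow>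
   ('k \<Rightarrow> 't::ab_group_add \<Rightarrow> 't) \<Rightarrow> ('a \<Rightarrow> 's \<Rightarrow> 't) \<Rightarrow> bool" where
  "is_tensor_product sA sS sT tp \<longleftrightarrow>
     vector_space sA \<and> vector_space sS \<and> vector_space sT \<and>
     bilin sA sS sT tp \<and>
     module.span sT (range (case_prod tp)) = UNIV \<and>
     (\<forall>B C. \<not> module.dependent sA B \<longrightarrow> \<not> module.dependent sS C \<longrightarrow>
        inj_on (case_prod tp) (B \<times> C) \<and> \<not> module.dependent sT (case_prod tp ` (B \<times> C)))"

definition k_algebra ::
  "('k::field \<Rightarrow> 'a::ab_group_add \<Rightarrow> 'a) \<Rightarrow> ('a \<Rightarrow> 'a \<Rightarrow> 'a) \<Rightarrow> bool" where
  "k_algebra sA mA \<longleftrightarrow> vector_space sA \<and> bilin sA sA sA mA"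

definition perfect ::
  "('k::field \<Rightarrow> 'a::ab_group_add \<Rightarrow> 'a) \<Rightarrow> ('a \<Rightarrow> 'a \<Rightarrow> 'a) \<Rightarrow> bool" where
  "perfect sA mA \<longleftrightarrow> module.span sA {mA x y | x y. True} = UNIV"

definition comm_k_algebra :: "('k::field \<Rightarrow> 's::comm_ring_1 \<Rightarrow> 's) \<Rightarrow> bool" where
  "comm_k_algebra sS \<longleftrightarrow> vector_space sS \<and> (\<forall>c x y. sS c (x * y) = sS c x * y)"

definition alg_aut ::
  "('k::field \<Rightarrow> 'a::ab_group_add \<Rightarrow> 'a) \<Rightarrow> ('a \<Rightarrow> 'a \<Rightarrow> 'a) \<Rightarrow> ('a \<Rightarrow> 'a) \<Rightarrow> bool" where
  "alg_aut sA mA f \<longleftrightarrow> bij f \<and> Vector_Spaces.linear sA sA f \<and> (\<forall>x y. f (mA x y) = mA (f x) (f y))"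

text \<open>Eigenspace \<open>X_{\bar i} = {x | \<sigma> x = \<omega>^i x}\<close>, i an integer.\<close>
definition grade :: "('k::field \<Rightarrow> 'a \<Rightarrow> 'a) \<Rightarrow> ('a \<Rightarrow> 'a) \<Rightarrow> 'k \<Rightarrow> int \<Rightarrow> 'a set" where
  "grade sc \<sigma> \<omega> i = {x. \<sigma> x = sc (\<omega> powi i) x}"

text \<open>Integer powers of a unit u of a commutative ring, v being its inverse.\<close>
definition zpow :: "'s::comm_ring_1 \<Rightarrow> 's \<Rightarrow> int \<Rightarrow> 's" where
  "zpow u v n = (if 0 \<le> n then u ^ nat n else v ^ nat (- n))"

text \<open>\<open>(A \<otimes> S)_{\bar 0} = \<Sum>_j A_{-\bar j} \<otimes> S_{\bar j}\<close>.\<close>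
definition fixed_sub ::
  "('k::field \<Rightarrow> 't::ab_group_add \<Rightarrow> 't) \<Rightarrow> ('a \<Rightarrow> 's \<Rightarrow> 't) \<Rightarrow> (int \<Rightarrow> 'a set) \<Rightarrow> (int \<Rightarrow> 's set) \<Rightarrow> 't set" where
  "fixed_sub sT tp gA gS = module.span sT {tp a s | a s j. a \<in> gA (- j) \<and> s \<in> gS j}"

definition derivation_on ::
  "('k::field \<Rightarrow> 't::ab_group_add \<Rightarrow> 't) \<Rightarrow> ('t \<Rightarrow> 't \<Rightarrow> 't) \<Rightarrow> 't set \<Rightarrow> ('t \<Rightarrow> 't) \<Rightarrow> bool" where
  "derivation_on sT mT B d \<longleftrightarrow>
     (\<forall>x\<in>B. d x \<in> B) \<and>
     (\<forall>x\<in>B. \<forall>y\<in>B. d (x + y) = d x + d y) \<and>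
     (\<forall>c. \<forall>x\<in>B. d (sT c x) = sT c (d x)) \<and>
     (\<forall>x\<in>B. \<forall>y\<in>B. d (mT x y) = mT (d x) y + mT x (d y))"

end

theory Submission
  imports Defs
begin


lemma vs_scale_scale: "vector_space sc \<Longrightarrow> sc a (sc b x) = sc (a * b) x"
  using vector_space.vector_space_assms(3) by metis

lemma vs_scale_one: "vector_space sc \<Longrightarrow> sc 1 x = x"
  using vector_space.vector_space_assms(4) by metis

lemma grade_mult:
  fixes sS :: "'k::field \<Rightarrow> 's::comm_ring_1 \<Rightarrow> 's"
  assumes S: "comm_k_algebra sS" and aut: "alg_aut sS (*) \<sigma>2" and w: "\<omega> \<noteq> 0"
    and x: "x \<in> grade sS \<sigma>2 \<omega> a" and y: "y \<in> grade sS \<sigma>2 \<omega> b"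
  shows "x * y \<in> grade sS \<sigma>2 \<omega> (a + b)"
proof -
  have vs: "vector_space sS" and cm: "\<And>c x y. sS c (x * y) = sS c x * y"
    using S by (auto simp: comm_k_algebra_def)
  have hom: "\<sigma>2 (x * y) = \<sigma>2 x * \<sigma>2 y" using aut by (simp add: alg_aut_def)
  have e: "x * sS (\<omega> powi b) y = sS (\<omega> powi b) (x * y)"
    by (metis cm mult.commute)
  have "\<sigma>2 (x * y) = sS (\<omega> powi a) x * sS (\<omega> powi b) y"
    using hom x y by (simp add: grade_def)
  also have "\<dots> = sS (\<omega> powi a) (x * sS (\<omega> powi b) y)" by (simp only: cm)
  also have "\<dots> = sS (\<omega> powi a) (sS (\<omega> powi b) (x * y))" by (simp only: e)
  also have "\<dots> = sS (\<omega> powi (a + b)) (x * y)"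
    using vs w by (simp add: vs_scale_scale power_int_add)
  finally show ?thesis by (simp add: grade_def)
qed

lemma grade_one:
  fixes sS :: "'k::field \<Rightarrow> 's::comm_ring_1 \<Rightarrow> 's"
  assumes S: "comm_k_algebra sS" and aut: "alg_aut sS (*) \<sigma>2"
  shows "1 \<in> grade sS \<sigma>2 \<omega> 0"
proof -
  have vs: "vector_space sS" using S by (auto simp: comm_k_algebra_def)
  obtain y where y: "\<sigma>2 y = 1" using aut unfolding alg_aut_def bij_def surj_def by metis
  have "\<sigma>2 (1 * y) = \<sigma>2 1 * \<sigma>2 y" using aut unfolding alg_aut_def by blast
  then have "\<sigma>2 1 = 1" using y by simp
  then show ?thesis using vs by (simp add: grade_def vs_scale_one)
qed

lemma grade_inv:
  fixes sS :: "'k::field \<Rightarrow> 's::comm_ring_1 \<Rightarrow> 's"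
  assumes S: "comm_k_algebra sS" and aut: "alg_aut sS (*) \<sigma>2" and w: "\<omega> \<noteq> 0"
    and u: "u \<in> grade sS \<sigma>2 \<omega> 1" and uv: "u * v = 1"
  shows "v \<in> grade sS \<sigma>2 \<omega> (-1)"
proof -
  have vs: "vector_space sS" and cm: "\<And>c x y. sS c (x * y) = sS c x * y"
    using S by (auto simp: comm_k_algebra_def)
  have one: "\<sigma>2 1 = 1" using grade_one[OF S aut, of \<omega>] vs by (simp add: grade_def vs_scale_one)
  have "\<sigma>2 u * \<sigma>2 v = 1" using aut uv one by (metis alg_aut_def)
  then have "sS \<omega> (u * \<sigma>2 v) = 1" using u by (simp add: grade_def cm)
  then have "sS (inverse \<omega>) (sS \<omega> (u * \<sigma>2 v)) = sS (inverse \<omega>) 1" by simp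
  then have h: "u * \<sigma>2 v = sS (inverse \<omega>) 1" using vs w by (simp add: vs_scale_scale vs_scale_one)
  have "\<sigma>2 v = v * (u * \<sigma>2 v)" using uv by (simp add: mult.assoc[symmetric] mult.commute)
  also have "\<dots> = sS (inverse \<omega>) v" using h by (metis cm mult.commute mult_1_left)
  finally show ?thesis by (simp add: grade_def power_int_minus)
qed

lemma grade_upow:
  fixes sS :: "'k::field \<Rightarrow> 's::comm_ring_1 \<Rightarrow> 's"
  assumes S: "comm_k_algebra sS" and aut: "alg_aut sS (*) \<sigma>2" and w: "\<omega> \<noteq> 0"
    and u: "u \<in> grade sS \<sigma>2 \<omega> a"
  shows "u ^ n \<in> grade sS \<sigma>2 \<omega> (int n * a)"
proof (induction n)
  case 0
  then show ?case using grade_one[OF S aut] by simp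
next
  case (Suc n)
  have "u * u ^ n \<in> grade sS \<sigma>2 \<omega> (a + int n * a)"
    by (rule grade_mult[OF S aut w u Suc])
  then show ?case by (simp add: algebra_simps)
qed

definition zp :: "'s::comm_ring_1 \<Rightarrow> 's \<Rightarrow> int \<Rightarrow> 's" where "zp = zpow"

lemma upow_vpow:
  fixes u v :: "'s::comm_ring_1"
  assumes uv: "u * v = 1"
  shows "u ^ a * v ^ b = zpow u v (int a - int b)"
proof (cases "b \<le> a")
  case True
  then have "u ^ a * v ^ b = u ^ (a - b) * (u * v) ^ b"
    by (metis le_add_diff_inverse2 mult.assoc power_add power_mult_distrib)
  then show ?thesis using True uv by (simp add: zpow_def nat_diff_distrib of_nat_diff)
next
  case False
  then have "u ^ a * v ^ b = v ^ (b - a) * (u * v) ^ a"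
    by (smt (verit) le_add_diff_inverse2 less_or_eq_imp_le mult.assoc mult.commute nat_le_linear power_add power_mult_distrib)
  moreover have "nat (int b - int a) = b - a" using False by simp
  ultimately show ?thesis using False uv by (simp add: zpow_def)
qed

lemma zpow_add:
  fixes u v :: "'s::comm_ring_1"
  assumes uv: "u * v = 1"
  shows "zpow u v a * zpow u v b = zpow u v (a + b)"
proof -
  have vu: "v * u = 1" using uv by (simp add: mult.commute)
  show ?thesis
  proof (cases "0 \<le> a"; cases "0 \<le> b")
    assume "0 \<le> a" "0 \<le> b" then show ?thesis by (simp add: zpow_def nat_add_distrib power_add)
  next
    assume "0 \<le> a" "\<not> 0 \<le> b" then show ?thesis using upow_vpow[OF uv, of "nat a" "nat (-b)"] by (simp add: zpow_def)
  next
    assume "\<not> 0 \<le> a" "0 \<le> b" then show ?thesis using upow_vpow[OF uv, of "nat b" "nat (-a)"]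
      by (simp add: zpow_def mult.commute add.commute)
  next
    assume "\<not> 0 \<le> a" "\<not> 0 \<le> b"
    moreover then have "nat (- a - b) = nat (-a) + nat (-b)" by simp
    ultimately show ?thesis by (simp add: zpow_def power_add)
  qed
qed

lemma grade_zpow:
  fixes sS :: "'k::field \<Rightarrow> 's::comm_ring_1 \<Rightarrow> 's"
  assumes S: "comm_k_algebra sS" and aut: "alg_aut sS (*) \<sigma>2" and w: "\<omega> \<noteq> 0"
    and u: "u \<in> grade sS \<sigma>2 \<omega> 1" and uv: "u * v = 1"
  shows "zpow u v n \<in> grade sS \<sigma>2 \<omega> n"
proof (cases "0 \<le> n")
  case True
  then show ?thesis using grade_upow[OF S aut w u, of "nat n"] by (simp add: zpow_def)
next
  case False
  then show ?thesis using grade_upow[OF S aut w grade_inv[OF S aut w u uv], of "nat (-n)"]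
    by (simp add: zpow_def)
qed

lemma grade_period:
  assumes "\<omega> ^ m = (1::'k::field)" "\<omega> \<noteq> 0"
  shows "grade sc \<sigma> \<omega> (n + int m) = grade sc \<sigma> \<omega> n"
  using assms by (simp add: grade_def power_int_add)

lemma lin_eq_univ:
  assumes vs: "vector_space sT" and sp: "module.span sT (range (case_prod tp)) = UNIV"
    and lf: "Vector_Spaces.linear sT sT f" and lg: "Vector_Spaces.linear sT sT g"
    and eq: "\<And>a b. f (tp a b) = g (tp a b)"
  shows "f x = g x"
proof -
  have vp: "vector_space_pair sT sT" using vs by (simp add: vector_space_pair_def)
  show ?thesis
    using vector_space_pair.linear_eq_on_span[OF vp lf lg, of "range (case_prod tp)" x] eq sp
    by (metis (no_types, lifting) UNIV_I case_prod_conv rangeE surj_pair)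
qed

lemma lin_diff: "Vector_Spaces.linear s1 s2 f \<Longrightarrow> f (x - y) = f x - f y"
  using module_hom.diff module_hom_iff_linear by metis

lemma lin_add: "Vector_Spaces.linear s1 s2 f \<Longrightarrow> f (x + y) = f x + f y"
  using module_hom.add module_hom_iff_linear by metis

theorem lemma4p7:
  fixes sA :: "'k::field \<Rightarrow> 'a::ab_group_add \<Rightarrow> 'a" and mA :: "'a \<Rightarrow> 'a \<Rightarrow> 'a"
    and sS :: "'k \<Rightarrow> 's::comm_ring_1 \<Rightarrow> 's"
    and sT :: "'k \<Rightarrow> 't::ab_group_add \<Rightarrow> 't" and tp :: "'a \<Rightarrow> 's \<Rightarrow> 't"
    and mT :: "'t \<Rightarrow> 't \<Rightarrow> 't" and act :: "'s \<Rightarrow> 't \<Rightarrow> 't"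
    and \<sigma>1 :: "'a \<Rightarrow> 'a" and \<sigma>2 :: "'s \<Rightarrow> 's"
    and m :: nat and \<omega> :: 'k and u v :: 's and d :: "'t \<Rightarrow> 't"
    and i j s t :: int and ai aj :: 'a and bi bj :: 's
  assumes m_pos: "0 < m"
    and char: "of_nat m \<noteq> (0::'k)"
    and prim: "\<omega> ^ m = 1" "\<forall>r. 0 < r \<and> r < m \<longrightarrow> \<omega> ^ r \<noteq> 1"
    and A_alg: "k_algebra sA mA" and A_perf: "perfect sA mA"
    and S_alg: "comm_k_algebra sS"
    and tensor: "is_tensor_product sA sS sT tp"
    and mT_bilin: "bilin sT sT sT mT"
    and mT_tp: "\<forall>a s a' s'. mT (tp a s) (tp a' s') = tp (mA a a') (s * s')"
    and act_lin: "\<forall>s'. Vector_Spaces.linear sT sT (act s')"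
    and act_tp: "\<forall>s' a s. act s' (tp a s) = tp a (s * s')"
    and \<sigma>1_aut: "alg_aut sA mA \<sigma>1" and \<sigma>1_m: "\<sigma>1 ^^ m = id"
    and \<sigma>2_aut: "alg_aut sS (*) \<sigma>2" and \<sigma>2_m: "\<sigma>2 ^^ m = id"
    and u_grade: "u \<in> grade sS \<sigma>2 \<omega> 1" and u_inv: "u * v = 1"
    and der: "derivation_on sT mT (fixed_sub sT tp (grade sA \<sigma>1 \<omega>) (grade sS \<sigma>2 \<omega>)) d"
    and ai: "ai \<in> grade sA \<sigma>1 \<omega> i" and aj: "aj \<in> grade sA \<sigma>1 \<omega> j"
    and bi: "bi \<in> grade sS \<sigma>2 \<omega> (- i + s)" and bj: "bj \<in> grade sS \<sigma>2 \<omega> (- j + t)"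
  shows
    "mT (act (zpow u v (- int m + s)) (d (tp ai (zpow u v (- s + int m) * bi)))
           - act (zpow u v s) (d (tp ai (zpow u v (- s) * bi))))
        (tp aj bj)
     = mT (tp ai bi)
        (act (zpow u v (- int m + t)) (d (tp aj (zpow u v (- t + int m) * bj)))
           - act (zpow u v t) (d (tp aj (zpow u v (- t) * bj))))
   \<and>
    mT (tp ai (zpow u v (- i)))
       (act (zpow u v (- j))
          (act (zpow u v (- int m + j)) (d (tp aj (zpow u v (- j + int m))))
           - act (zpow u v j) (d (tp aj (zpow u v (- j))))))
     = mT (act (zpow u v (- i))
          (act (zpow u v (- int m + i)) (d (tp ai (zpow u v (- i + int m))))
           - act (zpow u v i) (d (tp ai (zpow u v (- i))))))
       (tp aj (zpow u v (- j)))
   \<and>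
    mT (tp ai 1)
       (act (zpow u v (- int m + t)) (d (tp aj (zpow u v (- t + int m) * bj)))
         - act (zpow u v t) (d (tp aj (zpow u v (- t) * bj))))
     = mT (act (zpow u v (- int m + i)) (d (tp ai (zpow u v (- i + int m))))
         - act (zpow u v i) (d (tp ai (zpow u v (- i)))))
       (tp aj bj)"
  proof -
  let ?z = "zpow u v"
  let ?B = "fixed_sub sT tp (grade sA \<sigma>1 \<omega>) (grade sS \<sigma>2 \<omega>)"
  have w: "\<omega> \<noteq> 0" using prim(1) m_pos by (metis power_0_left less_not_refl zero_neq_one)
  have vsT: "vector_space sT" and spT: "module.span sT (range (case_prod tp)) = UNIV"
    using tensor by (auto simp: is_tensor_product_def)
  have msT: "module sT" using vsT by (simp add: module_iff_vector_space)
  have lmr: "\<And>p. Vector_Spaces.linear sT sT (mT p)"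
    and lml: "\<And>q. Vector_Spaces.linear sT sT (\<lambda>p. mT p q)"
    using mT_bilin by (auto simp: bilin_def)
  have lact: "\<And>c. Vector_Spaces.linear sT sT (act c)" using act_lin by auto
  have S_ax: "comm_k_algebra sS" by (fact S_alg)
  have AA: "act c (act c' x) = act (c' * c) x" for c c' x
  proof -
    have "(act c \<circ> act c') x = act (c' * c) x"
      by (rule lin_eq_univ[OF vsT spT Vector_Spaces.linear_compose[OF lact lact] lact])
        (simp add: act_tp mult.assoc)
    then show ?thesis by simp
  qed
  have LM0: "mT (act c (tp a b)) q = act c (mT (tp a b) q)" for c a b q
  proof -
    have "mT (tp a (b * c)) q = (act c \<circ> mT (tp a b)) q"
      by (rule lin_eq_univ[OF vsT spT lmr Vector_Spaces.linear_compose[OF lmr lact]])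
        (simp add: act_tp mT_tp mult_ac)
    then show ?thesis by (simp add: act_tp)
  qed
  have LM: "mT (act c p) q = act c (mT p q)" for c p q
  proof -
    have "((\<lambda>p. mT p q) \<circ> act c) p = (act c \<circ> (\<lambda>p. mT p q)) p"
      by (rule lin_eq_univ[OF vsT spT Vector_Spaces.linear_compose[OF lact lml]
            Vector_Spaces.linear_compose[OF lml lact]])
        (simp add: LM0)
    then show ?thesis by simp
  qed
  have MR0: "mT (tp a b) (act c q) = act c (mT (tp a b) q)" for c a b q
  proof -
    have "(mT (tp a b) \<circ> act c) q = (act c \<circ> mT (tp a b)) q"
      by (rule lin_eq_univ[OF vsT spT Vector_Spaces.linear_compose[OF lact lmr]
            Vector_Spaces.linear_compose[OF lmr lact]])
        (simp add: act_tp mT_tp mult_ac)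
    then show ?thesis by simp
  qed
  have MR: "mT p (act c q) = act c (mT p q)" for c p q
  proof -
    have "(\<lambda>p. mT p (act c q)) p = (act c \<circ> (\<lambda>p. mT p q)) p"
      by (rule lin_eq_univ[OF vsT spT lml Vector_Spaces.linear_compose[OF lml lact]])
        (simp add: MR0)
    then show ?thesis by simp
  qed
  have MM: "mT (act a p) (act b q) = act (b * a) (mT p q)" for a b p q
    by (simp add: LM MR AA mult.commute)
  have ZA: "a + b = n \<Longrightarrow> ?z a * ?z b = ?z n" for a b n
    using zpow_add[OF u_inv] by simp
  have Z0: "?z 0 = 1" by (simp add: zpow_def)
  have GZ: "?z n \<in> grade sS \<sigma>2 \<omega> n" for n
    by (rule grade_zpow[OF S_alg \<sigma>2_aut w u_grade u_inv])
  have GP: "grade sS \<sigma>2 \<omega> (n + int m) = grade sS \<sigma>2 \<omega> n" for n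
    by (rule grade_period[OF prim(1) w])
  have FS: "tp a y \<in> ?B" if "a \<in> grade sA \<sigma>1 \<omega> (- k)" "y \<in> grade sS \<sigma>2 \<omega> k" for a y k
    unfolding fixed_sub_def by (rule module.span_base[OF msT]) (use that in blast)
  have dl: "\<And>x y. x \<in> ?B \<Longrightarrow> y \<in> ?B \<Longrightarrow> d (mT x y) = mT (d x) y + mT x (d y)"
    using der by (simp add: derivation_on_def)
  have id1: "mT (act (?z (- int m + s1)) (d (tp a1 (?z (- s1 + int m) * b1)))
           - act (?z s1) (d (tp a1 (?z (- s1) * b1))))
        (tp a2 b2)
     = mT (tp a1 b1)
        (act (?z (- int m + t1)) (d (tp a2 (?z (- t1 + int m) * b2)))
           - act (?z t1) (d (tp a2 (?z (- t1) * b2))))"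
    if h1: "a1 \<in> grade sA \<sigma>1 \<omega> i1" and h2: "a2 \<in> grade sA \<sigma>1 \<omega> j1"
      and h3: "b1 \<in> grade sS \<sigma>2 \<omega> (- i1 + s1)" and h4: "b2 \<in> grade sS \<sigma>2 \<omega> (- j1 + t1)"
    for a1 a2 b1 b2 i1 j1 s1 t1
  proof -
    define X where "X = tp a1 (?z (- s1) * b1)"
    define X' where "X' = tp a1 (?z (- s1 + int m) * b1)"
    define Y where "Y = tp a2 (?z (- t1) * b2)"
    define Y' where "Y' = tp a2 (?z (- t1 + int m) * b2)"
    define c where "c = ?z (s1 + t1 - int m)"
    have ga1: "a1 \<in> grade sA \<sigma>1 \<omega> (- (- i1))" using h1 by simp
    have ga2: "a2 \<in> grade sA \<sigma>1 \<omega> (- (- j1))" using h2 by simp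
    have "?z (- s1) * b1 \<in> grade sS \<sigma>2 \<omega> (- s1 + (- i1 + s1))"
      by (rule grade_mult[OF S_alg \<sigma>2_aut w GZ h3])
    then have gX: "?z (- s1) * b1 \<in> grade sS \<sigma>2 \<omega> (- i1)" by simp
    have "?z (- s1 + int m) * b1 \<in> grade sS \<sigma>2 \<omega> (- s1 + int m + (- i1 + s1))"
      by (rule grade_mult[OF S_alg \<sigma>2_aut w GZ h3])
    then have gX': "?z (- s1 + int m) * b1 \<in> grade sS \<sigma>2 \<omega> (- i1)"
      using GP[of "- i1"] by (simp add: algebra_simps)
    have "?z (- t1) * b2 \<in> grade sS \<sigma>2 \<omega> (- t1 + (- j1 + t1))"
      by (rule grade_mult[OF S_alg \<sigma>2_aut w GZ h4])
    then have gY: "?z (- t1) * b2 \<in> grade sS \<sigma>2 \<omega> (- j1)" by simp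
    have "?z (- t1 + int m) * b2 \<in> grade sS \<sigma>2 \<omega> (- t1 + int m + (- j1 + t1))"
      by (rule grade_mult[OF S_alg \<sigma>2_aut w GZ h4])
    then have gY': "?z (- t1 + int m) * b2 \<in> grade sS \<sigma>2 \<omega> (- j1)"
      using GP[of "- j1"] by (simp add: algebra_simps)
    have XB: "X \<in> ?B" unfolding X_def by (rule FS[OF ga1 gX])
    have X'B: "X' \<in> ?B" unfolding X'_def by (rule FS[OF ga1 gX'])
    have YB: "Y \<in> ?B" unfolding Y_def by (rule FS[OF ga2 gY])
    have Y'B: "Y' \<in> ?B" unfolding Y'_def by (rule FS[OF ga2 gY'])
    have zz: "?z (- s1 + int m) * ?z (- t1) = ?z (- s1) * ?z (- t1 + int m)"
    proof -
      have "?z (- s1 + int m) * ?z (- t1) = ?z (- s1 - t1 + int m)" by (rule ZA) simp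
      also have "\<dots> = ?z (- s1) * ?z (- t1 + int m)" by (rule ZA[symmetric]) simp
      finally show ?thesis .
    qed
    have EQ: "mT X' Y = mT X Y'"
    proof -
      have "?z (- s1 + int m) * b1 * (?z (- t1) * b2) = (?z (- s1 + int m) * ?z (- t1)) * (b1 * b2)"
        by (simp add: mult_ac)
      also have "\<dots> = (?z (- s1) * ?z (- t1 + int m)) * (b1 * b2)" by (simp only: zz)
      also have "\<dots> = ?z (- s1) * b1 * (?z (- t1 + int m) * b2)" by (simp only: mult_ac)
      finally show ?thesis by (simp add: X_def X'_def Y_def Y'_def mT_tp)
    qed
    have "mT (d X') Y + mT X' (d Y) = mT (d X) Y' + mT X (d Y')"
      using dl[OF X'B YB] dl[OF XB Y'B] EQ by simp
    then have L: "mT (d X') Y - mT (d X) Y' = mT X (d Y') - mT X' (d Y)"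
      by (simp add: algebra_simps)
    then have "act c (mT (d X') Y - mT (d X) Y') = act c (mT X (d Y') - mT X' (d Y))"
      by simp
    then have L2: "act c (mT (d X') Y) - act c (mT (d X) Y') = act c (mT X (d Y')) - act c (mT X' (d Y))"
      by (simp only: lin_diff[OF lact])
    have cancel: "?z a * bb * ?z b = bb" if "a + b = 0" for a b bb
    proof -
      have "?z a * ?z b = 1" using ZA[OF that] Z0 by simp
      then show ?thesis by (metis mult.commute mult.left_commute mult_1_right)
    qed
    have Q1: "tp a2 b2 = act (?z t1) Y" unfolding Y_def by (simp add: act_tp cancel)
    have Q2: "tp a2 b2 = act (?z (t1 - int m)) Y'" unfolding Y'_def by (simp add: act_tp cancel)
    have P1: "tp a1 b1 = act (?z s1) X" unfolding X_def by (simp add: act_tp cancel)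
    have P2: "tp a1 b1 = act (?z (s1 - int m)) X'" unfolding X'_def by (simp add: act_tp cancel)
    have c1: "?z t1 * ?z (- int m + s1) = c" unfolding c_def by (rule ZA) simp
    have c2: "?z (t1 - int m) * ?z s1 = c" unfolding c_def by (rule ZA) simp
    have c3: "?z (- int m + t1) * ?z s1 = c" unfolding c_def by (rule ZA) simp
    have c4: "?z t1 * ?z (s1 - int m) = c" unfolding c_def by (rule ZA) simp
    have "mT (act (?z (- int m + s1)) (d X') - act (?z s1) (d X)) (tp a2 b2)
        = mT (act (?z (- int m + s1)) (d X')) (tp a2 b2) - mT (act (?z s1) (d X)) (tp a2 b2)"
      using lin_diff[OF lml] by simp
    also have "\<dots> = mT (act (?z (- int m + s1)) (d X')) (act (?z t1) Y)
                  - mT (act (?z s1) (d X)) (act (?z (t1 - int m)) Y')"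
      using Q1 Q2 by metis
    also have "\<dots> = act c (mT (d X') Y) - act c (mT (d X) Y')"
      by (simp only: MM c1 c2)
    also have "\<dots> = act c (mT X (d Y')) - act c (mT X' (d Y))" by (rule L2)
    also have "\<dots> = mT (act (?z s1) X) (act (?z (- int m + t1)) (d Y'))
                  - mT (act (?z (s1 - int m)) X') (act (?z t1) (d Y))"
      by (simp only: MM c3 c4)
    also have "\<dots> = mT (tp a1 b1) (act (?z (- int m + t1)) (d Y'))
                  - mT (tp a1 b1) (act (?z t1) (d Y))"
      using P1 P2 by metis
    also have "\<dots> = mT (tp a1 b1) (act (?z (- int m + t1)) (d Y') - act (?z t1) (d Y))"
      using lin_diff[OF lmr] by simp
    finally show ?thesis by (simp add: X_def X'_def Y_def Y'_def)
  qed
  have g1: "1 \<in> grade sS \<sigma>2 \<omega> (- k + k)" for k using grade_one[OF S_alg \<sigma>2_aut] by simp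
  show ?thesis
  proof (intro conjI)
    show "mT (act (?z (- int m + s)) (d (tp ai (?z (- s + int m) * bi)))
           - act (?z s) (d (tp ai (?z (- s) * bi))))
        (tp aj bj)
     = mT (tp ai bi)
        (act (?z (- int m + t)) (d (tp aj (?z (- t + int m) * bj)))
           - act (?z t) (d (tp aj (?z (- t) * bj))))"
      by (rule id1[OF ai aj bi bj])
  next
    have h: "mT (act (?z (- int m + i)) (d (tp ai (?z (- i + int m))))
           - act (?z i) (d (tp ai (?z (- i))))) (tp aj 1)
       = mT (tp ai 1) (act (?z (- int m + j)) (d (tp aj (?z (- j + int m))))
           - act (?z j) (d (tp aj (?z (- j)))))"
      using id1[OF ai aj g1 g1] by simp
    have ti: "tp ai (?z (- i)) = act (?z (- i)) (tp ai 1)" by (simp add: act_tp)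
    have tj: "tp aj (?z (- j)) = act (?z (- j)) (tp aj 1)" by (simp add: act_tp)
    show "mT (tp ai (?z (- i)))
       (act (?z (- j))
          (act (?z (- int m + j)) (d (tp aj (?z (- j + int m))))
           - act (?z j) (d (tp aj (?z (- j))))))
     = mT (act (?z (- i))
          (act (?z (- int m + i)) (d (tp ai (?z (- i + int m))))
           - act (?z i) (d (tp ai (?z (- i))))))
       (tp aj (?z (- j)))"
    proof -
      let ?Ej = "act (?z (- int m + j)) (d (tp aj (?z (- j + int m))))
           - act (?z j) (d (tp aj (?z (- j))))"
      let ?Ei = "act (?z (- int m + i)) (d (tp ai (?z (- i + int m))))
           - act (?z i) (d (tp ai (?z (- i))))"
      have e1: "mT (tp ai (?z (- i))) (act (?z (- j)) ?Ej) = act (?z (- j) * ?z (- i)) (mT (tp ai 1) ?Ej)"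
        using MM[of "?z (- i)" "tp ai 1" "?z (- j)" ?Ej] ti by metis
      have e2: "mT (act (?z (- i)) ?Ei) (tp aj (?z (- j))) = act (?z (- j) * ?z (- i)) (mT ?Ei (tp aj 1))"
        using MM[of "?z (- i)" ?Ei "?z (- j)" "tp aj 1"] tj by metis
      show ?thesis using e1 e2 h by metis
    qed
  next
    show "mT (tp ai 1)
       (act (?z (- int m + t)) (d (tp aj (?z (- t + int m) * bj)))
         - act (?z t) (d (tp aj (?z (- t) * bj))))
     = mT (act (?z (- int m + i)) (d (tp ai (?z (- i + int m))))
         - act (?z i) (d (tp ai (?z (- i)))))
       (tp aj bj)"
      using id1[OF ai aj g1 bj] by simp
  qed
qed

end
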